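(* Let $p\ne q$ be primes, $G=\mathbb{Z}_p^2\times\mathbb{Z}_q^2$, and $S\subseteq G$. Assume that for every nonzero $u\in\mathbb{Z}_p^2$ there is $x_u\in\mathbb{Z}_q^2$ with $\chi_{u+x_u}(S)=0$. Then there exist a nonnegative integer $c$ and a multiset $D\colon\mathbb{Z}_p^2\to\mathbb{N}$ such that $S_p=c\,1_{\mathbb{Z}_p^2}+qD$.
   Context: Elements of $G$ are written $a+b$ with $a\in\mathbb{Z}_p^2$, $b\in\mathbb{Z}_q^2$. For $w=u+v$ define $\chi_w(a+b)=\exp\big(2\pi i(\tfrac{u\cdot a}{p}+\tfrac{v\cdot b}{q})\big)$ and $\chi(S)=\sum_{s\in S}\chi(s)$. $S_p$ is the projection of $S$ to $\mathbb{Z}_p^2$ as a multiset: $S_p(a)=\#\{b\in\mathbb{Z}_q^2:a+b\in S\}$. *)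

theory Defs
  imports "HOL-Analysis.Analysis"
begin

definition Zn2 :: "nat \<Rightarrow> (nat \<times> nat) set" where
  "Zn2 n = {0..<n} \<times> {0..<n}"

definition dotp :: "nat \<times> nat \<Rightarrow> nat \<times> nat \<Rightarrow> nat" where
  "dotp u a = fst u * fst a + snd u * snd a"

text \<open>G = Z_p^2 x Z_q^2; an element a+b is the pair (a,b); a character index w=u+v is (u,v).\<close>
definition chi :: "nat \<Rightarrow> nat \<Rightarrow> (nat \<times> nat) \<times> (nat \<times> nat) \<Rightarrow> (nat \<times> nat) \<times> (nat \<times> nat) \<Rightarrow> complex" where
  "chi p q w g = exp (2 * of_real pi * \<i> *
      of_real (real (dotp (fst w) (fst g)) / real p + real (dotp (snd w) (snd g)) / real q))"

definition chiS :: "nat \<Rightarrow> nat \<Rightarrow> (nat \<times> nat) \<times> (nat \<times> nat) \<Rightarrow> ((nat \<times> nat) \<times> (nat \<times> nat)) set \<Rightarrow> complex" where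
  "chiS p q w S = (\<Sum>s\<in>S. chi p q w s)"

text \<open>Projection of S to Z_p^2 as a multiset (multiplicity function).\<close>
definition proj_p :: "nat \<Rightarrow> ((nat \<times> nat) \<times> (nat \<times> nat)) set \<Rightarrow> nat \<times> nat \<Rightarrow> nat" where
  "proj_p q S a = card {b \<in> Zn2 q. (a, b) \<in> S}"

end

theory Submission
  imports Defs "Jordan_Normal_Form.Char_Poly" "HOL-Computational_Algebra.Fundamental_Theorem_Algebra" "HOL-Number_Theory.Cong"
begin


definition zeta :: "nat \<Rightarrow> complex" where "zeta N = cis (2 * pi / real N)"

definition inR :: "nat \<Rightarrow> complex \<Rightarrow> bool" where
  "inR N z \<longleftrightarrow> (\<exists>c::nat\<Rightarrow>int. z = (\<Sum>k<N. of_int (c k) * zeta N ^ k))"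

lemma zeta_pow_N: assumes "N > 0" shows "zeta N ^ N = 1"
proof -
  have "zeta N ^ N = cis (real N * (2 * pi / real N))" unfolding zeta_def by (rule Complex.DeMoivre)
  also have "real N * (2 * pi / real N) = 2 * pi" using assms by simp
  finally show ?thesis by simp
qed

lemma zeta_pow_mod: assumes "N > 0" shows "zeta N ^ m = zeta N ^ (m mod N)"
proof -
  have "zeta N ^ m = zeta N ^ (N * (m div N) + m mod N)" by simp
  also have "\<dots> = (zeta N ^ N) ^ (m div N) * zeta N ^ (m mod N)" by (simp only: power_add power_mult)
  finally show ?thesis using zeta_pow_N[OF assms] by simp
qed

lemma inR_pow: assumes "N > 0" shows "inR N (zeta N ^ m)"
proof -
  let ?c = "\<lambda>k. if k = m mod N then 1 else 0 :: int"
  have "(\<Sum>k<N. of_int (?c k) * zeta N ^ k) = (\<Sum>k<N. if k = m mod N then zeta N ^ k else 0)"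
    by (rule sum.cong) auto
  also have "\<dots> = zeta N ^ (m mod N)"
    using assms by (simp add: sum.delta')
  finally have "zeta N ^ m = (\<Sum>k<N. of_int (?c k) * zeta N ^ k)"
    using zeta_pow_mod[OF assms, of m] by simp
  thus ?thesis unfolding inR_def by (intro exI[of _ ?c])
qed

lemma inR_add: "inR N z \<Longrightarrow> inR N w \<Longrightarrow> inR N (z + w)"
proof -
  assume "inR N z" "inR N w"
  then obtain c d where "z = (\<Sum>k<N. of_int (c k) * zeta N ^ k)" "w = (\<Sum>k<N. of_int (d k) * zeta N ^ k)"
    unfolding inR_def by blast
  hence "z + w = (\<Sum>k<N. of_int (c k + d k) * zeta N ^ k)"
    by (simp add: sum.distrib distrib_right)
  thus ?thesis unfolding inR_def by (intro exI[of _ "\<lambda>k. c k + d k"])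
qed

lemma inR_smult: "inR N z \<Longrightarrow> inR N (of_int a * z)"
proof -
  assume "inR N z"
  then obtain c where "z = (\<Sum>k<N. of_int (c k) * zeta N ^ k)"
    unfolding inR_def by blast
  hence "of_int a * z = (\<Sum>k<N. of_int (a * c k) * zeta N ^ k)"
    by (simp add: sum_distrib_left mult.assoc)
  thus ?thesis unfolding inR_def by (intro exI[of _ "\<lambda>k. a * c k"])
qed

lemma inR_0: "inR N 0"
  unfolding inR_def by (rule exI[of _ "\<lambda>_. 0"]) simp

lemma inR_uminus: "inR N z \<Longrightarrow> inR N (- z)"
  using inR_smult[of N z "-1"] by simp

lemma inR_diff: "inR N z \<Longrightarrow> inR N w \<Longrightarrow> inR N (z - w)"
  using inR_add[of N z "-w"] inR_uminus[of N w] by simp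

lemma inR_sum: "finite A \<Longrightarrow> (\<And>i. i \<in> A \<Longrightarrow> inR N (f i)) \<Longrightarrow> inR N (sum f A)"
proof (induction A rule: finite_induct)
  case empty
  then show ?case using inR_0 by simp
next
  case (insert x F)
  have "inR N (f x + sum f F)" by (rule inR_add) (use insert in auto)
  then show ?case using insert by simp
qed

lemma inR_mult_pow: assumes "N > 0" "inR N z" shows "inR N (z * zeta N ^ m)"
proof -
  from assms obtain c where "z = (\<Sum>k<N. of_int (c k) * zeta N ^ k)"
    unfolding inR_def by blast
  hence "z * zeta N ^ m = (\<Sum>k<N. of_int (c k) * zeta N ^ (k + m))"
    by (simp add: sum_distrib_right power_add mult.assoc)
  also have "inR N \<dots>"
    by (intro inR_sum inR_smult inR_pow assms) auto
  finally show ?thesis .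
qed

lemma inR_mult: assumes "N > 0" "inR N z" "inR N w" shows "inR N (z * w)"
proof -
  from assms obtain d where "w = (\<Sum>k<N. of_int (d k) * zeta N ^ k)"
    unfolding inR_def by blast
  hence "z * w = (\<Sum>k<N. of_int (d k) * (z * zeta N ^ k))"
    by (simp add: sum_distrib_left mult.assoc mult.left_commute)
  also have "inR N \<dots>"
    by (intro inR_sum inR_smult inR_mult_pow assms) auto
  finally show ?thesis .
qed

lemma inR_of_int: assumes "N > 0" shows "inR N (of_int a)"
  using inR_smult[OF inR_pow[OF assms, of 0], of a] by simp

lemma inR_power: assumes "N > 0" "inR N z" shows "inR N (z ^ m)"
proof (induction m)
  case 0
  show ?case using inR_pow[OF assms(1), of 0] by simp
next
  case (Suc m)
  show ?case using inR_mult[OF assms(1) assms(2) Suc] by simp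
qed


lemma inR_algebraic_int:
  assumes N: "N > 0" and z: "inR N z"
  shows "algebraic_int z"
proof -
  have "\<forall>j. \<exists>c::nat\<Rightarrow>int. z * zeta N ^ j = (\<Sum>k<N. of_int (c k) * zeta N ^ k)"
    using inR_mult_pow[OF N z] unfolding inR_def by blast
  then obtain C where C: "\<And>j. z * zeta N ^ j = (\<Sum>k<N. of_int (C j k) * zeta N ^ k)"
    by metis
  define A :: "int mat" where "A = mat N N (\<lambda>(j,k). C j k)"
  define B :: "complex mat" where "B = map_mat of_int A"
  define g :: "complex vec" where "g = vec N (\<lambda>k. zeta N ^ k)"
  have A: "A \<in> carrier_mat N N" unfolding A_def by simp
  have B: "B \<in> carrier_mat N N" unfolding B_def using A by simp
  have "eigenvector B g z"
    unfolding eigenvector_def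
  proof (intro conjI)
    show "g \<in> carrier_vec (dim_row B)" using B unfolding g_def by simp
    show "g \<noteq> 0\<^sub>v (dim_row B)"
    proof
      assume "g = 0\<^sub>v (dim_row B)"
      hence "g $ 0 = 0\<^sub>v (dim_row B) $ 0" by simp
      thus False using N B unfolding g_def by simp
    qed
    show "B *\<^sub>v g = z \<cdot>\<^sub>v g"
    proof (rule eq_vecI)
      show "dim_vec (B *\<^sub>v g) = dim_vec (z \<cdot>\<^sub>v g)" using B unfolding g_def by simp
      fix j assume "j < dim_vec (z \<cdot>\<^sub>v g)"
      hence j: "j < N" unfolding g_def by simp
      have "(B *\<^sub>v g) $ j = row B j \<bullet> g" using B j by simp
      also have "\<dots> = (\<Sum>k\<in>{0..<N}. row B j $ k * g $ k)"
        unfolding scalar_prod_def g_def by simp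
      also have "\<dots> = (\<Sum>k<N. of_int (C j k) * zeta N ^ k)"
        using j A by (intro sum.cong) (auto simp: B_def A_def g_def row_def)
      also have "\<dots> = z * zeta N ^ j" using C[of j] by simp
      also have "\<dots> = (z \<cdot>\<^sub>v g) $ j" using j unfolding g_def by simp
      finally show "(B *\<^sub>v g) $ j = (z \<cdot>\<^sub>v g) $ j" .
    qed
  qed
  hence "eigenvalue B z" unfolding eigenvalue_def by blast
  hence "poly (char_poly B) z = 0" using eigenvalue_root_char_poly[OF B] by simp
  also have "char_poly B = map_poly of_int (char_poly A)"
    unfolding B_def by (rule of_int_hom.char_poly_hom[OF A])
  finally have 1: "poly (map_poly of_int (char_poly A)) z = 0" .
  have "degree (char_poly A) = N \<and> coeff (char_poly A) N = 1"
    by (rule degree_monic_char_poly[OF A])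
  hence 2: "lead_coeff (char_poly A) = 1" by simp
  show ?thesis unfolding algebraic_int_altdef_ipoly using 1 2 by blast
qed



lemma eta_eq: assumes "p > 0" "q > 0" shows "zeta (p*q) ^ p = cis (2 * pi / real q)"
proof -
  have "zeta (p*q) ^ p = cis (real p * (2 * pi / real (p*q)))"
    unfolding zeta_def by (rule Complex.DeMoivre)
  also have "real p * (2 * pi / real (p*q)) = 2 * pi / real q" using assms by (simp add: field_simps)
  finally show ?thesis .
qed

lemma cis_root_ne1: assumes "q > 1" shows "cis (2 * pi / real q) \<noteq> 1"
proof -
  have inj: "inj_on (\<lambda>k. cis (2 * pi * real k / real q)) {..<q}"
    using Complex.bij_betw_roots_unity[of q] assms unfolding bij_betw_def by simp
  have "cis (2 * pi * real (1::nat) / real q) \<noteq> cis (2 * pi * real (0::nat) / real q)"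
    using inj_onD[OF inj, of 1 0] assms by auto
  thus ?thesis by simp
qed

lemma units_prod_mset:
  assumes "\<And>x. x \<in># M \<Longrightarrow> \<exists>y. inR N y \<and> (1 - x) * y = 1" and "N > 0"
  shows "\<exists>y. inR N y \<and> (\<Prod>x\<in>#M. (1 - x)) * y = 1"
  using assms(1)
proof (induction M)
  case empty
  then show ?case using inR_of_int[OF assms(2), of 1] by (intro exI[of _ 1]) simp
next
  case (add x M)
  then obtain y where y: "inR N y" "(\<Prod>x\<in>#M. (1 - x)) * y = 1" by auto
  from add.prems obtain y' where y': "inR N y'" "(1 - x) * y' = 1" by auto
  have "inR N (y * y')" using inR_mult[OF assms(2) y(1) y'(1)] .
  moreover have "(\<Prod>x\<in>#add_mset x M. (1 - x)) * (y * y') = ((1 - x) * y') * ((\<Prod>x\<in>#M. (1 - x)) * y)"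
    by (simp add: algebra_simps)
  ultimately show ?case using y y' by auto
qed

lemma key:
  fixes p q :: nat and n0 :: int and r :: complex
  assumes q: "prime q" and p: "p > 0"
    and r: "inR (p*q) r" and eq: "of_int n0 = (1 - zeta (p*q) ^ p) * r"
  shows "int q dvd n0"
proof (rule ccontr)
  assume ndvd: "\<not> int q dvd n0"
  define N where "N = p * q"
  have q1: "q > 1" using q prime_gt_1_nat by blast
  have N: "N > 0" using p q1 unfolding N_def by simp
  define \<eta> where "\<eta> = zeta N ^ p"
  have eta: "\<eta> = cis (2 * pi / real q)" unfolding \<eta>_def N_def using eta_eq p q1 by simp
  have eta1: "\<eta> \<noteq> 1" using eta cis_root_ne1[OF q1] by simp
  have etaq: "\<eta> ^ q = 1" unfolding \<eta>_def using zeta_pow_N[OF N] by (simp add: N_def power_mult[symmetric])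
  have etaR: "inR N (\<eta> ^ k)" for k unfolding \<eta>_def power_mult[symmetric] by (rule inR_pow[OF N])
  define s where "s = (\<Sum>j<q. \<Sum>i<j. \<eta> ^ i)"
  have sR: "inR N s" unfolding s_def by (intro inR_sum etaR) auto
  have geo0: "(\<Sum>j<q. \<eta> ^ j) = 0" using geometric_sum[OF eta1, of q] etaq by simp
  have "(1 - \<eta>) * s = (\<Sum>j<q. 1 - \<eta> ^ j)"
    unfolding s_def sum_distrib_left one_diff_power_eq ..
  also have "\<dots> = of_nat q - (\<Sum>j<q. \<eta> ^ j)" by (simp add: sum_subtractf)
  finally have s_eq: "(1 - \<eta>) * s = of_nat q" using geo0 by simp
  have "coprime (int q) n0" using ndvd q by (intro prime_imp_coprime) auto
  then obtain \<alpha> \<beta> :: int where ab: "\<alpha> * n0 + \<beta> * int q = 1"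
    using bezout_int[of n0 "int q"] by (metis coprime_imp_gcd_eq_1 gcd.commute)
  define t where "t = of_int \<alpha> * r + of_int \<beta> * s"
  have tR: "inR N t" unfolding t_def using r sR by (intro inR_add inR_smult) (auto simp: N_def)
  have t_eq: "(1 - \<eta>) * t = 1"
  proof -
    have "(1 - \<eta>) * t = of_int \<alpha> * ((1 - \<eta>) * r) + of_int \<beta> * ((1 - \<eta>) * s)"
      unfolding t_def by (simp add: algebra_simps)
    also have "\<dots> = of_int (\<alpha> * n0 + \<beta> * int q)"
      using eq s_eq unfolding \<eta>_def N_def by simp
    finally show ?thesis using ab by simp
  qed
  have U3: "\<exists>y. inR N y \<and> (1 - x) * y = 1" if x: "x ^ q = 1" "x \<noteq> 1" for x
  proof -
    have "x \<in> (\<lambda>k. cis (2 * pi * real k / real q)) ` {..<q}"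
      using Complex.bij_betw_roots_unity[of q] q1 x unfolding bij_betw_def by auto
    then obtain k where k: "k < q" "x = cis (2 * pi * real k / real q)" by auto
    have xk: "x = \<eta> ^ k" unfolding k eta Complex.DeMoivre by (simp add: field_simps)
    have k0: "k \<noteq> 0" using x(2) xk by (cases k) auto
    have "coprime k q"
    proof -
      have "\<not> q dvd k" using k k0 by (auto dest: dvd_imp_le)
      hence "coprime q k" using q by (intro prime_imp_coprime) auto
      thus ?thesis by (simp add: coprime_commute)
    qed
    then obtain k' where k': "[k * k' = Suc 0] (mod q)" using cong_solve_coprime_nat by blast
    have "x ^ k' = \<eta> ^ (k * k')" unfolding xk by (simp add: power_mult)
    also have "\<eta> ^ (k * k') = \<eta> ^ ((k * k') mod q)"
    proof -
      have "\<eta> ^ (k * k') = \<eta> ^ (q * ((k*k') div q) + (k * k') mod q)" by simp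
      also have "\<dots> = (\<eta> ^ q) ^ ((k*k') div q) * \<eta> ^ ((k * k') mod q)"
        by (simp only: power_add power_mult)
      finally show ?thesis using etaq by simp
    qed
    also have "(k * k') mod q = 1" using k' q1 unfolding cong_def by simp
    finally have xk': "x ^ k' = \<eta>" by simp
    define y where "y = (\<Sum>i<k'. x ^ i) * t"
    have "inR N y" unfolding y_def xk power_mult[symmetric]
      by (intro inR_mult[OF N] inR_sum etaR tR) auto
    moreover have "(1 - x) * y = 1"
    proof -
      have "(1 - x) * y = (1 - x ^ k') * t" unfolding y_def one_diff_power_eq by (simp add: mult.assoc)
      thus ?thesis using xk' t_eq by simp
    qed
    ultimately show ?thesis by blast
  qed
  define f :: "complex poly" where "f = (\<Sum>i<q. monom 1 i)"
  have cf: "coeff f i = (if i < q then 1 else 0)" for i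
    unfolding f_def by (simp add: coeff_sum coeff_monom)
  have degf: "degree f = q - 1"
  proof (rule antisym)
    show "degree f \<le> q - 1" by (rule degree_le) (auto simp: cf)
    show "q - 1 \<le> degree f" by (rule le_degree) (use q1 in \<open>auto simp: cf\<close>)
  qed
  have lcf: "lead_coeff f = 1" using degf cf q1 by simp
  have polyf: "poly f x = (\<Sum>i<q. x ^ i)" for x unfolding f_def by (simp add: poly_sum poly_monom)
  have f1: "poly f 1 = of_nat q" using polyf by simp
  have decomp: "f = (\<Prod>x\<in>#proots f. [:-x, 1:])"
    using complex_poly_decompose_multiset[of f] lcf by simp
  have "of_nat q = poly (\<Prod>x\<in>#proots f. [:-x, 1:]) (1::complex)" using f1 decomp by simp
  also have "\<dots> = (\<Prod>x\<in>#proots f. (1 - x))" by (simp add: poly_prod_mset)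
  finally have qprod: "(of_nat q :: complex) = (\<Prod>x\<in>#proots f. (1 - x))" .
  have "\<exists>y. inR N y \<and> (1 - x) * y = 1" if xin: "x \<in># proots f" for x
  proof (rule U3)
    have fne: "f \<noteq> 0" using f1 q1 by auto
    have fx: "poly f x = 0" using xin set_count_proots[OF fne] by auto
    show "x \<noteq> 1" using fx f1 q1 by auto
    hence "(x - 1) * poly f x = x ^ q - 1" unfolding polyf by (simp add: power_diff_1_eq)
    thus "x ^ q = 1" using fx by simp
  qed
  from units_prod_mset[OF this N] obtain y where y: "inR N y" "of_nat q * y = 1"
    using qprod by auto
  have "algebraic_int y" by (rule inR_algebraic_int[OF N y(1)])
  moreover have yq: "y = 1 / of_nat q" using y(2) q1 by (simp add: field_simps)
  moreover have "y \<in> \<rat>" unfolding yq by simp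
  ultimately have "y \<in> \<int>" using rational_algebraic_int_is_int by blast
  then obtain m where "y = of_int m" by (elim Ints_cases)
  hence "(of_int (int q * m) :: complex) = 1" using y(2) by simp
  hence "int q * m = 1" using of_int_eq_1_iff by blast
  hence "int q dvd 1" by (metis dvd_triv_left)
  thus False using q1 by simp
qed



lemma zeta_pow_cis:
  assumes "p > 0" "q > 0"
  shows "zeta (p*q) ^ (q*m) = cis (2 * pi / real p) ^ m"
proof -
  have "zeta (p*q) ^ (q*m) = cis (real (q*m) * (2 * pi / real (p*q)))"
    unfolding zeta_def by (rule Complex.DeMoivre)
  also have "real (q*m) * (2 * pi / real (p*q)) = real m * (2 * pi / real p)"
    using assms by (simp add: field_simps)
  also have "cis (real m * (2 * pi / real p)) = cis (2 * pi / real p) ^ m"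
    by (rule Complex.DeMoivre[symmetric])
  finally show ?thesis .
qed

lemma chi_eq:
  assumes "p > 0" "q > 0"
  shows "chi p q (u, x) s = cis (2 * pi / real p) ^ dotp u (fst s) * cis (2 * pi / real q) ^ dotp x (snd s)"
proof -
  have "cis (2 * pi / real p) ^ dotp u (fst s) * cis (2 * pi / real q) ^ dotp x (snd s)
      = cis (real (dotp u (fst s)) * (2 * pi / real p)) * cis (real (dotp x (snd s)) * (2 * pi / real q))"
    by (simp add: Complex.DeMoivre)
  also have "\<dots> = cis (real (dotp u (fst s)) * (2 * pi / real p) + real (dotp x (snd s)) * (2 * pi / real q))"
    by (simp add: cis_mult)
  also have "\<dots> = exp (\<i> * complex_of_real (real (dotp u (fst s)) * (2 * pi / real p) + real (dotp x (snd s)) * (2 * pi / real q)))"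
    by (simp add: cis_conv_exp)
  also have "\<i> * complex_of_real (real (dotp u (fst s)) * (2 * pi / real p) + real (dotp x (snd s)) * (2 * pi / real q))
     = 2 * of_real pi * \<i> * of_real (real (dotp u (fst s)) / real p + real (dotp x (snd s)) / real q)"
    by (simp add: algebra_simps)
  finally show ?thesis unfolding chi_def by simp
qed

lemma root_sum:
  assumes p: "p > 1"
  shows "(\<Sum>j\<in>{0..<p}. cis (2 * pi / real p) ^ (j * c)) = (if p dvd c then of_nat p else 0)"
proof -
  define w where "w = cis (2 * pi / real p)"
  have wp: "w ^ p = 1"
  proof -
    have "w ^ p = cis (real p * (2 * pi / real p))" unfolding w_def by (rule Complex.DeMoivre)
    also have "real p * (2 * pi / real p) = 2 * pi" using p by simp
    finally show ?thesis by simp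
  qed
  show ?thesis
  proof (cases "p dvd c")
    case True
    then obtain k where c: "c = p * k" by blast
    have "w ^ (j * c) = 1" for j unfolding c
      by (metis power_mult wp power_one mult.left_commute)
    then show ?thesis using True unfolding w_def[symmetric] by simp
  next
    case False
    have wc: "w ^ c = w ^ (c mod p)"
    proof -
      have "w ^ c = w ^ (p * (c div p) + c mod p)" by simp
      also have "\<dots> = (w ^ p) ^ (c div p) * w ^ (c mod p)" by (simp only: power_add power_mult)
      finally show ?thesis using wp by simp
    qed
    have cm: "c mod p \<noteq> 0" "c mod p < p" using False p by (auto simp: dvd_eq_mod_eq_0)
    have inj: "inj_on (\<lambda>k. cis (2 * pi * real k / real p)) {..<p}"
      using Complex.bij_betw_roots_unity[of p] p unfolding bij_betw_def by simp
    have "cis (2 * pi * real (c mod p) / real p) \<noteq> cis (2 * pi * real (0::nat) / real p)"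
      using inj_onD[OF inj, of "c mod p" 0] cm p by auto
    moreover have "w ^ (c mod p) = cis (2 * pi * real (c mod p) / real p)"
      unfolding w_def Complex.DeMoivre by (simp add: field_simps)
    ultimately have wc1: "w ^ c \<noteq> 1" using wc by simp
    have "(\<Sum>j\<in>{0..<p}. w ^ (j * c)) = (\<Sum>j<p. (w ^ c) ^ j)"
      unfolding lessThan_atLeast0 by (intro sum.cong refl) (simp add: power_mult[symmetric] mult.commute)
    also have "\<dots> = ((w ^ c) ^ p - 1) / (w ^ c - 1)" by (rule geometric_sum[OF wc1])
    also have "(w ^ c) ^ p = 1" by (metis power_mult power_mult_distrib wp power_one mult.commute)
    finally show ?thesis using False unfolding w_def by simp
  qed
qed

lemma dvd_shift_iff:
  fixes a b p :: nat
  assumes "a < p" "b < p"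
  shows "p dvd a + (p - 1) * b \<longleftrightarrow> a = b"
proof -
  have p0: "p > 0" using assms by simp
  have pb: "(p - 1) * b + b = p * b" using p0 by (cases p) auto
  hence "int ((p - 1) * b) + int b = int p * int b" by (metis of_nat_add of_nat_mult)
  hence e: "int (a + (p - 1) * b) = (int a - int b) + int p * int b" by simp
  have "p dvd a + (p - 1) * b \<longleftrightarrow> int p dvd int (a + (p - 1) * b)" by (simp only: of_nat_dvd_iff)
  also have "\<dots> \<longleftrightarrow> int p dvd (int a - int b)" unfolding e
    by (simp add: dvd_add_left_iff)
  also have "\<dots> \<longleftrightarrow> a = b"
  proof
    assume d: "int p dvd (int a - int b)"
    show "a = b"
    proof (rule ccontr)
      assume "a \<noteq> b"
      hence "int a - int b \<noteq> 0" by simp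
      from dvd_imp_le_int[OF this d] have "int p \<le> \<bar>int a - int b\<bar>" by simp
      thus False using assms by linarith
    qed
  qed simp
  finally show ?thesis .
qed



theorem proposition4p7:
  fixes p q :: nat and S :: "((nat \<times> nat) \<times> (nat \<times> nat)) set"
  assumes "prime p" and "prime q" and "p \<noteq> q"
    and "S \<subseteq> Zn2 p \<times> Zn2 q"
    and "\<forall>u\<in>Zn2 p. u \<noteq> (0, 0) \<longrightarrow> (\<exists>x\<in>Zn2 q. chiS p q (u, x) S = 0)"
  shows "\<exists>(c::nat) (D :: nat \<times> nat \<Rightarrow> nat).
           \<forall>a\<in>Zn2 p. proj_p q S a = c + q * D a"
proof -
  have p1: "p > 1" using assms(1) prime_gt_1_nat by blast
  have q1: "q > 1" using assms(2) prime_gt_1_nat by blast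
  have p0: "p > 0" and q0: "q > 0" using p1 q1 by auto
  define N where "N = p * q"
  have N0: "N > 0" unfolding N_def using p0 q0 by simp
  define \<omega> where "\<omega> = cis (2 * pi / real p)"
  define \<eta> where "\<eta> = cis (2 * pi / real q)"
  have omR: "inR N (\<omega> ^ m)" for m
    using inR_pow[OF N0, of "q*m"] zeta_pow_cis[OF p0 q0, of m] unfolding N_def \<omega>_def by simp
  have etR: "inR N (\<eta> ^ m)" for m
    using inR_pow[OF N0, of "p*m"] zeta_pow_cis[OF q0 p0, of m] unfolding N_def \<eta>_def
    by (simp add: mult.commute)
  have eta_z: "zeta (p*q) ^ p = \<eta>" unfolding \<eta>_def by (rule eta_eq[OF p0 q0])
  have finZ: "finite (Zn2 n)" for n unfolding Zn2_def by simp
  have finS: "finite S" using assms(4) finite_subset finZ by blast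
  have fstS: "fst s \<in> Zn2 p" if "s \<in> S" for s using assms(4) that by auto
  define B where "B u = (\<Sum>s\<in>S. \<omega> ^ dotp u (fst s))" for u
  have Bu: "\<exists>r. inR N r \<and> B u = (1 - \<eta>) * r" if u: "u \<in> Zn2 p" "u \<noteq> (0,0)" for u
  proof -
    obtain x where x: "x \<in> Zn2 q" "chiS p q (u,x) S = 0" using assms(5) u by blast
    have z0: "(\<Sum>s\<in>S. \<omega> ^ dotp u (fst s) * \<eta> ^ dotp x (snd s)) = 0"
      using x(2) unfolding chiS_def chi_eq[OF p0 q0] \<omega>_def \<eta>_def .
    define r where "r = (\<Sum>s\<in>S. \<omega> ^ dotp u (fst s) * (\<Sum>i<dotp x (snd s). \<eta> ^ i))"
    have rR: "inR N r" unfolding r_def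
    proof (rule inR_sum[OF finS])
      fix s assume "s \<in> S"
      show "inR N (\<omega> ^ dotp u (fst s) * (\<Sum>i<dotp x (snd s). \<eta> ^ i))"
        by (rule inR_mult[OF N0 omR inR_sum]) (auto intro: etR)
    qed
    have trm: "\<omega> ^ a - \<omega> ^ a * \<eta> ^ l = (1 - \<eta>) * (\<omega> ^ a * (\<Sum>i<l. \<eta> ^ i))" for a l
    proof -
      have "(1 - \<eta>) * (\<omega> ^ a * (\<Sum>i<l. \<eta> ^ i)) = \<omega> ^ a * ((1 - \<eta>) * (\<Sum>i<l. \<eta> ^ i))"
        by (simp add: algebra_simps)
      also have "(1 - \<eta>) * (\<Sum>i<l. \<eta> ^ i) = 1 - \<eta> ^ l" by (rule one_diff_power_eq[symmetric])
      finally show ?thesis by (simp add: algebra_simps)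
    qed
    have "B u = B u - (\<Sum>s\<in>S. \<omega> ^ dotp u (fst s) * \<eta> ^ dotp x (snd s))" using z0 by simp
    also have "\<dots> = (\<Sum>s\<in>S. \<omega> ^ dotp u (fst s) - \<omega> ^ dotp u (fst s) * \<eta> ^ dotp x (snd s))"
      unfolding B_def sum_subtractf ..
    also have "\<dots> = (\<Sum>s\<in>S. (1 - \<eta>) * (\<omega> ^ dotp u (fst s) * (\<Sum>i<dotp x (snd s). \<eta> ^ i)))"
      by (intro sum.cong refl trm)
    also have "\<dots> = (1 - \<eta>) * r" unfolding r_def sum_distrib_left ..
    finally show ?thesis using rR by blast
  qed
  have "\<forall>u\<in>Zn2 p - {(0,0)}. \<exists>r. inR N r \<and> B u = (1 - \<eta>) * r" using Bu by blast
  then obtain rr where rr: "\<And>u. u \<in> Zn2 p - {(0,0)} \<Longrightarrow> inR N (rr u) \<and> B u = (1 - \<eta>) * rr u"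
    by metis
  have inner: "(\<Sum>u\<in>Zn2 p. \<omega> ^ ((p - 1) * dotp u a0) * \<omega> ^ dotp u a)
      = (if a = a0 then of_nat (p^2) else 0)" if a0: "a0 \<in> Zn2 p" and a: "a \<in> Zn2 p" for a0 a
  proof -
    define c1 where "c1 = fst a + (p - 1) * fst a0"
    define c2 where "c2 = snd a + (p - 1) * snd a0"
    have ex: "\<omega> ^ ((p - 1) * dotp u a0) * \<omega> ^ dotp u a = \<omega> ^ (fst u * c1) * \<omega> ^ (snd u * c2)" for u
    proof -
      have "(p - 1) * dotp u a0 + dotp u a = fst u * c1 + snd u * c2"
        unfolding dotp_def c1_def c2_def by (simp add: algebra_simps)
      thus ?thesis by (simp add: power_add[symmetric])
    qed
    have "(\<Sum>u\<in>Zn2 p. \<omega> ^ ((p - 1) * dotp u a0) * \<omega> ^ dotp u a)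
        = (\<Sum>u\<in>{0..<p} \<times> {0..<p}. \<omega> ^ (fst u * c1) * \<omega> ^ (snd u * c2))"
      unfolding Zn2_def ex ..
    also have "\<dots> = (\<Sum>i\<in>{0..<p}. \<Sum>j\<in>{0..<p}. \<omega> ^ (i * c1) * \<omega> ^ (j * c2))"
      by (simp add: sum.cartesian_product split_def)
    also have "\<dots> = (\<Sum>i\<in>{0..<p}. \<omega> ^ (i * c1)) * (\<Sum>j\<in>{0..<p}. \<omega> ^ (j * c2))"
      by (simp add: sum_product)
    also have "\<dots> = (if p dvd c1 then of_nat p else 0) * (if p dvd c2 then of_nat p else 0)"
      unfolding \<omega>_def root_sum[OF p1] ..
    also have "p dvd c1 \<longleftrightarrow> fst a = fst a0"
      unfolding c1_def using a a0 by (intro dvd_shift_iff) (auto simp: Zn2_def)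
    also have "p dvd c2 \<longleftrightarrow> snd a = snd a0"
      unfolding c2_def using a a0 by (intro dvd_shift_iff) (auto simp: Zn2_def)
    finally show ?thesis by (auto simp: prod_eq_iff power2_eq_square)
  qed
  have main: "int q dvd int (p^2 * proj_p q S a0) - int (card S)" if a0: "a0 \<in> Zn2 p" for a0
  proof -
    define W where "W u = \<omega> ^ ((p - 1) * dotp u a0)" for u
    have "(\<Sum>u\<in>Zn2 p. W u * B u) = (\<Sum>u\<in>Zn2 p. \<Sum>s\<in>S. W u * \<omega> ^ dotp u (fst s))"
      unfolding B_def sum_distrib_left ..
    also have "\<dots> = (\<Sum>s\<in>S. \<Sum>u\<in>Zn2 p. W u * \<omega> ^ dotp u (fst s))" by (rule sum.swap)
    also have "\<dots> = (\<Sum>s\<in>S. if fst s = a0 then of_nat (p^2) else 0)"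
      unfolding W_def using inner[OF a0] fstS by (intro sum.cong refl) auto
    also have "\<dots> = (\<Sum>s\<in>{s\<in>S. fst s = a0}. of_nat (p^2))"
      by (rule sum.inter_filter[OF finS, symmetric])
    also have "\<dots> = of_nat (p^2 * card {s\<in>S. fst s = a0})" by simp
    also have "card {s\<in>S. fst s = a0} = proj_p q S a0"
    proof -
      have "{s\<in>S. fst s = a0} = (\<lambda>b. (a0, b)) ` {b \<in> Zn2 q. (a0, b) \<in> S}"
        using assms(4) by force
      moreover have "inj_on (\<lambda>b. (a0, b)) {b \<in> Zn2 q. (a0, b) \<in> S}" by (auto simp: inj_on_def)
      ultimately show ?thesis unfolding proj_p_def by (simp add: card_image)
    qed
    finally have lhs: "(\<Sum>u\<in>Zn2 p. W u * B u) = of_nat (p^2 * proj_p q S a0)" .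
    have z00: "(0,0) \<in> Zn2 p" unfolding Zn2_def using p0 by simp
    have "(\<Sum>u\<in>Zn2 p. W u * B u) = W (0,0) * B (0,0) + (\<Sum>u\<in>Zn2 p - {(0,0)}. W u * B u)"
      by (rule sum.remove[OF finZ z00])
    also have "W (0,0) * B (0,0) = of_nat (card S)" unfolding W_def B_def dotp_def by simp
    also have "(\<Sum>u\<in>Zn2 p - {(0,0)}. W u * B u) = (1 - \<eta>) * (\<Sum>u\<in>Zn2 p - {(0,0)}. W u * rr u)"
      unfolding sum_distrib_left
    proof (intro sum.cong refl)
      fix u assume "u \<in> Zn2 p - {(0,0)}"
      hence "B u = (1 - \<eta>) * rr u" using rr by blast
      thus "W u * B u = (1 - \<eta>) * (W u * rr u)" by simp
    qed
    finally have eq: "of_nat (p^2 * proj_p q S a0) = of_nat (card S) + (1 - \<eta>) * (\<Sum>u\<in>Zn2 p - {(0,0)}. W u * rr u)"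
      using lhs by simp
    have RR: "inR (p*q) (\<Sum>u\<in>Zn2 p - {(0,0)}. W u * rr u)"
      unfolding N_def[symmetric] W_def
      by (intro inR_sum inR_mult[OF N0] omR) (use rr finZ in auto)
    have "of_int (int (p^2 * proj_p q S a0) - int (card S)) = (1 - zeta (p*q) ^ p) * (\<Sum>u\<in>Zn2 p - {(0,0)}. W u * rr u)"
      unfolding eta_z using eq by simp
    from key[OF assms(2) p0 RR this] show ?thesis .
  qed
  have z00: "(0,0) \<in> Zn2 p" unfolding Zn2_def using p0 by simp
  have nd: "\<not> int q dvd int (p^2)"
  proof
    assume "int q dvd int (p^2)"
    hence "q dvd p^2" by (simp only: of_nat_dvd_iff)
    hence "q dvd p" using assms(2) prime_dvd_power by blast
    thus False using assms(1,2,3) by (metis primes_dvd_imp_eq)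
  qed
  have qpr: "prime (int q)" using assms(2) by simp
  have cong: "proj_p q S a mod q = proj_p q S (0,0) mod q" if a: "a \<in> Zn2 p" for a
  proof -
    have "int q dvd (int (p^2 * proj_p q S a) - int (card S)) - (int (p^2 * proj_p q S (0,0)) - int (card S))"
      using main[OF a] main[OF z00] by (rule dvd_diff)
    also have "(int (p^2 * proj_p q S a) - int (card S)) - (int (p^2 * proj_p q S (0,0)) - int (card S))
        = int (p^2) * (int (proj_p q S a) - int (proj_p q S (0,0)))" by (simp add: algebra_simps)
    finally have "int q dvd int (proj_p q S a) - int (proj_p q S (0,0))"
      using nd qpr prime_dvd_mult_iff by blast
    hence "int (proj_p q S a) mod int q = int (proj_p q S (0,0)) mod int q"
      by (simp add: mod_eq_dvd_iff)
    thus ?thesis by (metis of_nat_eq_iff of_nat_mod)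
  qed
  show ?thesis
  proof (intro exI ballI)
    fix a assume a: "a \<in> Zn2 p"
    show "proj_p q S a = proj_p q S (0,0) mod q + q * (proj_p q S a div q)"
      using cong[OF a] by (metis mod_mult_div_eq)
  qed
qed


end
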